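(* Let $X$ be a topological space, let $Y$ be a Urysohn space, let $S$ be a dense subset of $X$ and let $f:S\to Y$ be a $\theta$-continuous map. Then the following are equivalent: (1) $f$ has a $\theta$-continuous extension to $X$; (2) both of the following hold: $(+)$ for every family $\{A_\beta\}$ of subsets of $Y$ with $\bigcap_\beta \mathrm{cl}_\theta A_\beta=\emptyset$ one has $\bigcap_\beta\overline{f^{-1}(A_\beta)}=\emptyset$ (closures in $X$); and $(++)$ for every open set $W$ of $Y$ there is an open set $V$ of $X$ with $X_\theta(f^{-1}(W))\subseteq V\subseteq X_\theta(f^{-1}(\overline W))$.
   Context: A Urysohn space is one in which any two distinct points have open neighborhoods with disjoint closures. A map $g:T\to Y$ is $\theta$-continuous if for every $t\in T$ and every open neighborhood $U$ of $g(t)$ there is a neighborhood $W$ of $t$ with $g(W)\subseteq\overline U$ (for $f:S\to Y$, $S$ carries the subspace topology). For $M\subseteq Y$, $\mathrm{cl}_\theta M$ is the set of $y\in Y$ with $\mathrm{cl}\,U\cap M\neq\emptyset$ for every open $U\ni y$. $\mathcal N(x)$ is the set of open neighborhoods of $x$ in $X$. For $V\subseteq Y$, $X_\theta(f^{-1}(V))$ is the set of points $x\in X$ with $\bigcap\{\mathrm{cl}_\theta f(P\cap S):P\in\mathcal N(x)\}\subseteq V$. *)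

theory Defs
  imports "HOL-Analysis.Analysis"
begin

definition urysohn_space :: "'b topology \<Rightarrow> bool" where
  "urysohn_space Y \<longleftrightarrow>
     (\<forall>x\<in>topspace Y. \<forall>y\<in>topspace Y. x \<noteq> y \<longrightarrow>
        (\<exists>U V. openin Y U \<and> openin Y V \<and> x \<in> U \<and> y \<in> V \<and>
               Y closure_of U \<inter> Y closure_of V = {}))"

definition theta_continuous_map :: "'a topology \<Rightarrow> 'b topology \<Rightarrow> ('a \<Rightarrow> 'b) \<Rightarrow> bool" where
  "theta_continuous_map T Y g \<longleftrightarrow>
     g ` topspace T \<subseteq> topspace Y \<and>
     (\<forall>t\<in>topspace T. \<forall>U. openin Y U \<and> g t \<in> U \<longrightarrow>
        (\<exists>W. openin T W \<and> t \<in> W \<and> g ` W \<subseteq> Y closure_of U))"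

definition theta_closure :: "'b topology \<Rightarrow> 'b set \<Rightarrow> 'b set" where
  "theta_closure Y M =
     {y \<in> topspace Y. \<forall>U. openin Y U \<and> y \<in> U \<longrightarrow> Y closure_of U \<inter> M \<noteq> {}}"

text \<open>X_theta(f^{-1}(V)) for f defined on S \<subseteq> X.\<close>
definition X_theta :: "'a topology \<Rightarrow> 'b topology \<Rightarrow> 'a set \<Rightarrow> ('a \<Rightarrow> 'b) \<Rightarrow> 'b set \<Rightarrow> 'a set" where
  "X_theta X Y S f V =
     {x \<in> topspace X.
        \<Inter>{theta_closure Y (f ` (P \<inter> S)) | P. openin X P \<and> x \<in> P} \<subseteq> V}"

end

theory Submission
  imports Defs
begin

definition Ith :: "'a topology \<Rightarrow> 'b topology \<Rightarrow> 'a set \<Rightarrow> ('a \<Rightarrow> 'b) \<Rightarrow> 'a \<Rightarrow> 'b set" where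
  "Ith X Y S f x = \<Inter>{theta_closure Y (f ` (P \<inter> S)) | P. openin X P \<and> x \<in> P}"

lemma Ith_mem: "y \<in> Ith X Y S f x \<longleftrightarrow> (\<forall>P. openin X P \<and> x \<in> P \<longrightarrow> y \<in> theta_closure Y (f ` (P \<inter> S)))"
  unfolding Ith_def by blast

lemma theta_closure_mem: "y \<in> theta_closure Y M \<longleftrightarrow> y \<in> topspace Y \<and>
   (\<forall>U. openin Y U \<and> y \<in> U \<longrightarrow> Y closure_of U \<inter> M \<noteq> {})"
  unfolding theta_closure_def by blast

lemma X_theta_eq: "X_theta X Y S f V = {x \<in> topspace X. Ith X Y S f x \<subseteq> V}"
  unfolding X_theta_def Ith_def by blast

lemma dense_meet:
  assumes "X closure_of S = topspace X" "openin X P" "x \<in> P"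
  shows "\<exists>s\<in>S. s \<in> P"
proof -
  have "x \<in> topspace X" using assms openin_subset by blast
  then have "x \<in> X closure_of S" using assms by simp
  then show ?thesis using assms unfolding in_closure_of by blast
qed

lemma ext_I:
  assumes ury: "urysohn_space Y" and dense: "X closure_of S = topspace X"
    and g: "theta_continuous_map X Y g" and ext: "\<forall>x\<in>S. g x = f x"
    and x: "x \<in> topspace X"
  shows "Ith X Y S f x = {g x}"
proof -
  have gY: "g x \<in> topspace Y" using g x unfolding theta_continuous_map_def by blast
  have gc: "\<And>U. openin Y U \<Longrightarrow> g x \<in> U \<Longrightarrow> \<exists>W. openin X W \<and> x \<in> W \<and> g ` W \<subseteq> Y closure_of U"
    using g x unfolding theta_continuous_map_def by blast
  have "g x \<in> Ith X Y S f x"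
    unfolding Ith_mem theta_closure_mem
  proof (intro allI impI conjI gY)
    fix P U assume P: "openin X P \<and> x \<in> P" and U: "openin Y U \<and> g x \<in> U"
    obtain W where W: "openin X W" "x \<in> W" "g ` W \<subseteq> Y closure_of U" using gc U by blast
    obtain s where s: "s \<in> S" "s \<in> W \<inter> P" using dense_meet[OF dense openin_Int[OF W(1)] ] P W by blast
    have "f s \<in> Y closure_of U" using s W ext by force
    then show "Y closure_of U \<inter> f ` (P \<inter> S) \<noteq> {}" using s by blast
  qed
  moreover have "y = g x" if y: "y \<in> Ith X Y S f x" for y
  proof (rule ccontr)
    assume ne: "y \<noteq> g x"
    have "y \<in> theta_closure Y (f ` (topspace X \<inter> S))" using y x unfolding Ith_mem by auto
    then have yY: "y \<in> topspace Y" unfolding theta_closure_mem by blast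
    obtain U U' where UU: "openin Y U" "openin Y U'" "g x \<in> U" "y \<in> U'"
      "Y closure_of U \<inter> Y closure_of U' = {}"
      using ury gY yY ne unfolding urysohn_space_def by metis
    obtain W where W: "openin X W" "x \<in> W" "g ` W \<subseteq> Y closure_of U" using gc UU by blast
    have "y \<in> theta_closure Y (f ` (W \<inter> S))" using y W unfolding Ith_mem by blast
    then have "Y closure_of U' \<inter> f ` (W \<inter> S) \<noteq> {}" using UU unfolding theta_closure_mem by blast
    then obtain s where s: "s \<in> W" "s \<in> S" "f s \<in> Y closure_of U'" by blast
    have "f s \<in> Y closure_of U" using s W ext by force
    then show False using s UU by blast
  qed
  ultimately show ?thesis by blast
qed

lemma plus_I:
  assumes ury: "urysohn_space Y" and dense: "X closure_of S = topspace X"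
    and fY: "f ` S \<subseteq> topspace Y"
    and plus: "\<forall>\<A>. (\<forall>A\<in>\<A>. A \<subseteq> topspace Y) \<longrightarrow>
               topspace Y \<inter> \<Inter>{theta_closure Y A | A. A \<in> \<A>} = {} \<longrightarrow>
               topspace X \<inter> \<Inter>{X closure_of {s \<in> S. f s \<in> A} | A. A \<in> \<A>} = {}"
    and x: "x \<in> topspace X"
  shows "\<exists>z. Ith X Y S f x = {z}"
proof -
  define \<A> where "\<A> = {A. A \<subseteq> topspace Y \<and> x \<in> X closure_of {s \<in> S. f s \<in> A}}"
  have sub: "\<forall>A\<in>\<A>. A \<subseteq> topspace Y" unfolding \<A>_def by blast
  have "x \<in> topspace X \<inter> \<Inter>{X closure_of {s \<in> S. f s \<in> A} | A. A \<in> \<A>}"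
    using x unfolding \<A>_def by blast
  then have "topspace X \<inter> \<Inter>{X closure_of {s \<in> S. f s \<in> A} | A. A \<in> \<A>} \<noteq> {}" by blast
  then have "topspace Y \<inter> \<Inter>{theta_closure Y A | A. A \<in> \<A>} \<noteq> {}"
    using mp[OF spec[OF plus, of \<A>] sub] by blast
  then obtain z where z: "z \<in> topspace Y" "\<And>A. A \<in> \<A> \<Longrightarrow> z \<in> theta_closure Y A" by blast
  have "z \<in> Ith X Y S f x"
    unfolding Ith_mem
  proof (intro allI impI)
    fix P assume P: "openin X P \<and> x \<in> P"
    have "f ` (P \<inter> S) \<in> \<A>"
      unfolding \<A>_def
    proof (intro CollectI conjI)
      show "f ` (P \<inter> S) \<subseteq> topspace Y" using fY by blast
      show "x \<in> X closure_of {s \<in> S. f s \<in> f ` (P \<inter> S)}"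
        unfolding in_closure_of
      proof (intro conjI x allI impI)
        fix T assume T: "x \<in> T \<and> openin X T"
        obtain s where "s \<in> S" "s \<in> T \<inter> P" using dense_meet[OF dense openin_Int] T P by blast
        then show "\<exists>y. y \<in> {s \<in> S. f s \<in> f ` (P \<inter> S)} \<and> y \<in> T" by blast
      qed
    qed
    then show "z \<in> theta_closure Y (f ` (P \<inter> S))" using z by blast
  qed
  moreover have "y = z" if y: "y \<in> Ith X Y S f x" for y
  proof (rule ccontr)
    assume ne: "y \<noteq> z"
    have "y \<in> theta_closure Y (f ` (topspace X \<inter> S))" using y x unfolding Ith_mem by auto
    then have yY: "y \<in> topspace Y" unfolding theta_closure_mem by blast
    obtain U U' where UU: "openin Y U" "openin Y U'" "z \<in> U" "y \<in> U'"
      "Y closure_of U \<inter> Y closure_of U' = {}"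
      using ury z(1) yY ne unfolding urysohn_space_def by metis
    define C where "C = Y closure_of U'"
    have "C \<in> \<A>"
      unfolding \<A>_def
    proof (intro CollectI conjI)
      show "C \<subseteq> topspace Y" unfolding C_def by (rule closure_of_subset_topspace)
      show "x \<in> X closure_of {s \<in> S. f s \<in> C}"
        unfolding in_closure_of
      proof (intro conjI x allI impI)
        fix T assume T: "x \<in> T \<and> openin X T"
        have "y \<in> theta_closure Y (f ` (T \<inter> S))" using y T unfolding Ith_mem by blast
        then have "Y closure_of U' \<inter> f ` (T \<inter> S) \<noteq> {}" using UU unfolding theta_closure_mem by blast
        then show "\<exists>y. y \<in> {s \<in> S. f s \<in> C} \<and> y \<in> T" unfolding C_def by blast
      qed
    qed
    then have "z \<in> theta_closure Y (Y closure_of U')" using z unfolding C_def by blast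
    then have "Y closure_of U \<inter> Y closure_of U' \<noteq> {}" using UU unfolding theta_closure_mem by blast
    then show False using UU by blast
  qed
  ultimately show ?thesis by blast
qed

theorem corollary4p3:
  fixes X :: "'a topology" and Y :: "'b topology" and S :: "'a set" and f :: "'a \<Rightarrow> 'b"
  assumes "urysohn_space Y"
    and "S \<subseteq> topspace X" and "X closure_of S = topspace X"
    and "theta_continuous_map (subtopology X S) Y f"
  shows "(\<exists>g. theta_continuous_map X Y g \<and> (\<forall>x\<in>S. g x = f x)) \<longleftrightarrow>
         ((\<forall>\<A>. (\<forall>A\<in>\<A>. A \<subseteq> topspace Y) \<longrightarrow>
               topspace Y \<inter> \<Inter>{theta_closure Y A | A. A \<in> \<A>} = {} \<longrightarrow>
               topspace X \<inter> \<Inter>{X closure_of {s \<in> S. f s \<in> A} | A. A \<in> \<A>} = {})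
          \<and> (\<forall>W. openin Y W \<longrightarrow>
               (\<exists>V. openin X V \<and> X_theta X Y S f W \<subseteq> V \<and>
                    V \<subseteq> X_theta X Y S f (Y closure_of W))))"
  (is "?L \<longleftrightarrow> ?P1 \<and> ?P2")
proof
  assume ?L
  then obtain g where g: "theta_continuous_map X Y g" and ext: "\<forall>x\<in>S. g x = f x" by blast
  have I: "\<And>x. x \<in> topspace X \<Longrightarrow> Ith X Y S f x = {g x}"
    using ext_I[OF assms(1) assms(3) g ext] by blast
  have Xt: "\<And>V. X_theta X Y S f V = {x \<in> topspace X. g x \<in> V}"
    unfolding X_theta_eq using I by auto
  have gc: "\<And>x U. x \<in> topspace X \<Longrightarrow> openin Y U \<Longrightarrow> g x \<in> U \<Longrightarrow> \<exists>W. openin X W \<and> x \<in> W \<and> g ` W \<subseteq> Y closure_of U"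
    using g unfolding theta_continuous_map_def by blast
  have gY: "\<And>x. x \<in> topspace X \<Longrightarrow> g x \<in> topspace Y" using g unfolding theta_continuous_map_def by blast
  show "?P1 \<and> ?P2"
  proof
    show ?P1
    proof (intro allI impI)
      fix \<A> :: "'b set set"
      assume sub: "\<forall>A\<in>\<A>. A \<subseteq> topspace Y" and emp: "topspace Y \<inter> \<Inter>{theta_closure Y A | A. A \<in> \<A>} = {}"
      show "topspace X \<inter> \<Inter>{X closure_of {s \<in> S. f s \<in> A} | A. A \<in> \<A>} = {}"
      proof (rule ccontr)
        assume "\<not> ?thesis"
        then obtain x where x: "x \<in> topspace X" and xc: "\<And>A. A \<in> \<A> \<Longrightarrow> x \<in> X closure_of {s \<in> S. f s \<in> A}" by blast
        have "g x \<in> theta_closure Y A" if A: "A \<in> \<A>" for A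
          unfolding theta_closure_mem
        proof (intro conjI allI impI gY x)
          fix U assume U: "openin Y U \<and> g x \<in> U"
          obtain W where W: "openin X W" "x \<in> W" "g ` W \<subseteq> Y closure_of U" using gc x U by blast
          obtain s where s: "s \<in> S" "f s \<in> A" "s \<in> W" using xc[OF A] W unfolding in_closure_of by blast
          have "f s \<in> Y closure_of U" using s W ext by force
          then show "Y closure_of U \<inter> A \<noteq> {}" using s by blast
        qed
        then have "g x \<in> topspace Y \<inter> \<Inter>{theta_closure Y A | A. A \<in> \<A>}" using gY x by blast
        then show False using emp by blast
      qed
    qed
    show ?P2
    proof (intro allI impI)
      fix W assume W: "openin Y W"
      define V where "V = \<Union>{P. openin X P \<and> g ` P \<subseteq> Y closure_of W}"
      have "openin X V" unfolding V_def by (rule openin_Union) blast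
      moreover have "X_theta X Y S f W \<subseteq> V"
      proof
        fix x assume "x \<in> X_theta X Y S f W"
        then have x: "x \<in> topspace X" "g x \<in> W" unfolding Xt by auto
        then obtain P where "openin X P" "x \<in> P" "g ` P \<subseteq> Y closure_of W" using gc W by blast
        then show "x \<in> V" unfolding V_def by blast
      qed
      moreover have "V \<subseteq> X_theta X Y S f (Y closure_of W)"
        unfolding V_def Xt using openin_subset by fastforce
      ultimately show "\<exists>V. openin X V \<and> X_theta X Y S f W \<subseteq> V \<and> V \<subseteq> X_theta X Y S f (Y closure_of W)"
        by blast
    qed
  qed
next
  assume R: "?P1 \<and> ?P2"
  have fY: "f ` S \<subseteq> topspace Y"
    using assms(2,4) unfolding theta_continuous_map_def by (simp add: Int_absorb1)
  define g where "g x = (SOME z. Ith X Y S f x = {z})" for x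
  have I: "Ith X Y S f x = {g x}" if x: "x \<in> topspace X" for x
  proof -
    obtain z where "Ith X Y S f x = {z}" using plus_I[OF assms(1) assms(3) fY conjunct1[OF R] x] by blast
    then show ?thesis unfolding g_def by (rule someI)
  qed
  have gY: "g x \<in> topspace Y" if x: "x \<in> topspace X" for x
  proof -
    have "g x \<in> Ith X Y S f x" using I[OF x] by simp
    then have "g x \<in> theta_closure Y (f ` (topspace X \<inter> S))" using x unfolding Ith_mem by auto
    then show ?thesis unfolding theta_closure_mem by blast
  qed
  have Xt: "\<And>V. X_theta X Y S f V = {x \<in> topspace X. g x \<in> V}"
    unfolding X_theta_eq using I by auto
  have ext: "\<forall>x\<in>S. g x = f x"
  proof
    fix s assume s: "s \<in> S"
    have sX: "s \<in> topspace X" using s assms(2) by blast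
    have fsY: "f s \<in> topspace Y" using fY s by blast
    have "f s \<in> theta_closure Y (f ` (P \<inter> S))" if P: "openin X P" "s \<in> P" for P
      unfolding theta_closure_mem
    proof (intro conjI fsY allI impI)
      fix U assume U: "openin Y U \<and> f s \<in> U"
      have "U \<subseteq> topspace Y" using U openin_subset by blast
      then have "U \<subseteq> Y closure_of U" by (rule closure_of_subset)
      then have "f s \<in> Y closure_of U" using U by blast
      moreover have "f s \<in> f ` (P \<inter> S)" using s P by blast
      ultimately show "Y closure_of U \<inter> f ` (P \<inter> S) \<noteq> {}" by blast
    qed
    then have "f s \<in> Ith X Y S f s" unfolding Ith_mem by blast
    then show "g s = f s" using I[OF sX] by simp
  qed
  have "theta_continuous_map X Y g"
    unfolding theta_continuous_map_def
  proof (intro conjI ballI allI impI)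
    show "g ` topspace X \<subseteq> topspace Y" using gY by blast
    fix x U assume x: "x \<in> topspace X" and U: "openin Y U \<and> g x \<in> U"
    obtain V where V: "openin X V" "X_theta X Y S f U \<subseteq> V" "V \<subseteq> X_theta X Y S f (Y closure_of U)"
    proof -
      have "openin Y U" using U by blast
      then show ?thesis using conjunct2[OF R] that by metis
    qed
    have "x \<in> V" using V(2) x U unfolding Xt by blast
    moreover have "g ` V \<subseteq> Y closure_of U" using V(3) unfolding Xt by blast
    ultimately show "\<exists>W. openin X W \<and> x \<in> W \<and> g ` W \<subseteq> Y closure_of U" using V(1) by blast
  qed
  then show ?L using ext by (intro exI[of _ g] conjI)
qed

end
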